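(* Let $m \geq 5$ be an odd integer. The digraph $H_{2m}$ admits a $\vec{C}_m$-factorization (in fact one consisting of four $\vec{C}_m$-factors).
   Context: $H_{2m} = \vec{X}(m,\{\pm 1\}) \wr \overline{K}_2$ is the digraph with vertex set $\{x_a, y_a : a \in \mathbb{Z}_m\}$ whose arcs are exactly $(u_a, v_b)$ for all $u, v \in \{x, y\}$ and all $a, b \in \mathbb{Z}_m$ with $b - a \equiv \pm 1 \pmod m$. (Here $\vec{X}(m,D)$ is the directed circulant on $\mathbb{Z}_m$ with arcs $(a,b)$ whenever $b-a \in D$ modulo $m$, $\overline{K}_2$ is the empty graph on two vertices $\{x,y\}$, and the wreath product $G \wr H$ has vertex set $V(G)\times V(H)$ with an arc from $(g_1,h_1)$ to $(g_2,h_2)$ iff $(g_1,g_2)\in A(G)$, or $g_1=g_2$ and $(h_1,h_2)\in A(H)$; we write $x_a=(a,x)$, $y_a=(a,y)$.) A $\vec{C}_m$-factor of a digraph is a spanning subdigraph that is a disjoint union of directed $m$-cycles; a $\vec{C}_m$-factorization is a partition of the arc set into $\vec{C}_m$-factors. *)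

theory Defs
  imports Main
begin

text \<open>Vertices of H_{2m} are pairs (a, u) with a \<in> {0..<m} (representing Z_m)
and u :: bool (False = x, True = y), so x_a = (a, False), y_a = (a, True).\<close>

definition H_verts :: "nat \<Rightarrow> (nat \<times> bool) set" where
  "H_verts m = {0..<m} \<times> UNIV"

definition H_arcs :: "nat \<Rightarrow> ((nat \<times> bool) \<times> (nat \<times> bool)) set" where
  "H_arcs m = {((a, u), (b, v)). a < m \<and> b < m \<and>
      (b = (a + 1) mod m \<or> a = (b + 1) mod m)}"

definition is_dicycle :: "nat \<Rightarrow> ('v \<times> 'v) set \<Rightarrow> bool" where
  "is_dicycle m C \<longleftrightarrow> (\<exists>vs. length vs = m \<and> distinct vs \<and>
      C = {(vs ! i, vs ! ((i + 1) mod m)) | i. i < m})"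

definition arc_verts :: "('v \<times> 'v) set \<Rightarrow> 'v set" where
  "arc_verts C = fst ` C \<union> snd ` C"

definition is_Cm_factor :: "nat \<Rightarrow> 'v set \<Rightarrow> ('v \<times> 'v) set \<Rightarrow> ('v \<times> 'v) set \<Rightarrow> bool" where
  "is_Cm_factor m V A F \<longleftrightarrow> F \<subseteq> A \<and>
     (\<exists>Cs. (\<forall>C\<in>Cs. is_dicycle m C) \<and>
           (\<forall>C\<in>Cs. \<forall>D\<in>Cs. C \<noteq> D \<longrightarrow> arc_verts C \<inter> arc_verts D = {}) \<and>
           \<Union>(arc_verts ` Cs) = V \<and>
           \<Union>Cs = F)"

definition is_Cm_factorization :: "nat \<Rightarrow> 'v set \<Rightarrow> ('v \<times> 'v) set \<Rightarrow> ('v \<times> 'v) set set \<Rightarrow> bool" where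
  "is_Cm_factorization m V A Fs \<longleftrightarrow>
     (\<forall>F\<in>Fs. is_Cm_factor m V A F) \<and>
     (\<forall>F\<in>Fs. \<forall>G\<in>Fs. F \<noteq> G \<longrightarrow> F \<inter> G = {}) \<and>
     \<Union>Fs = A"

end

theory Submission
  imports Defs
begin

definition ff :: "nat \<Rightarrow> nat \<Rightarrow> bool" where
  "ff i a = (if a = 0 then (i = 0 \<or> i = 3) else if odd a then i < 2 else even i)"

definition Fw :: "nat \<Rightarrow> nat \<Rightarrow> ((nat \<times> bool) \<times> (nat \<times> bool)) set" where
  "Fw m i = {((a, ff i a), ((a+1) mod m, ff i ((a+1) mod m))) | a. a < m}"

definition Bw :: "nat \<Rightarrow> nat \<Rightarrow> ((nat \<times> bool) \<times> (nat \<times> bool)) set" where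
  "Bw m i = {(((a+1) mod m, \<not> ff i ((a+1) mod m)), (a, \<not> ff i a)) | a. a < m}"

definition Fac :: "nat \<Rightarrow> nat \<Rightarrow> ((nat \<times> bool) \<times> (nat \<times> bool)) set" where
  "Fac m i = Fw m i \<union> Bw m i"

lemma dicycle_gen:
  assumes "inj_on g {..<m}"
  shows "is_dicycle m {(g i, g ((i+1) mod m)) | i. i < m}"
proof -
  have m0: "m > 0 \<Longrightarrow> (i+1) mod m < m" for i by simp
  show ?thesis unfolding is_dicycle_def
  proof (intro exI[of _ "map g [0..<m]"] conjI)
    show "distinct (map g [0..<m])" using assms by (simp add: distinct_map lessThan_atLeast0)
    show "{(g i, g ((i+1) mod m)) | i. i < m} =
      {(map g [0..<m] ! i, map g [0..<m] ! ((i + 1) mod m)) |i. i < m}"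
    proof (cases "m = 0")
      case True then show ?thesis by simp
    next
      case False
      then have eq: "\<And>i. i < m \<Longrightarrow> (g i, g ((i+1) mod m)) = (map g [0..<m] ! i, map g [0..<m] ! ((i + 1) mod m))"
        by simp
      show ?thesis
      proof (rule Collect_cong, rule iffI)
        fix x assume "\<exists>i. x = (g i, g ((i + 1) mod m)) \<and> i < m"
        then obtain i where "x = (g i, g ((i + 1) mod m))" "i < m" by blast
        then show "\<exists>i. x = (map g [0..<m] ! i, map g [0..<m] ! ((i + 1) mod m)) \<and> i < m"
          using eq by metis
      next
        fix x assume "\<exists>i. x = (map g [0..<m] ! i, map g [0..<m] ! ((i + 1) mod m)) \<and> i < m"
        then obtain i where "x = (map g [0..<m] ! i, map g [0..<m] ! ((i + 1) mod m))" "i < m" by blast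
        then show "\<exists>i. x = (g i, g ((i + 1) mod m)) \<and> i < m"
          using eq by metis
      qed
    qed
  qed simp
qed

lemma Fw_cycle: "is_dicycle m (Fw m i)"
proof -
  have "Fw m i = {((\<lambda>a. (a, ff i a)) a, (\<lambda>a. (a, ff i a)) ((a+1) mod m)) | a. a < m}"
    unfolding Fw_def by simp
  moreover have "inj_on (\<lambda>a. (a, ff i a)) {..<m}" by (auto simp: inj_on_def)
  ultimately show ?thesis using dicycle_gen[of "\<lambda>a. (a, ff i a)" m] by simp
qed

lemma Bw_cycle:
  assumes "m > 0"
  shows "is_dicycle m (Bw m i)"
proof -
  define g where "g = (\<lambda>j. ((m - j) mod m, \<not> ff i ((m - j) mod m)))"
  have inj: "inj_on g {..<m}"
  proof (rule inj_onI)
    fix x y assume x: "x \<in> {..<m}" and y: "y \<in> {..<m}" and e: "g x = g y"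
    then have "(m - x) mod m = (m - y) mod m" by (simp add: g_def)
    with x y show "x = y"
      by (cases "x = 0"; cases "y = 0"; simp)
  qed
  have key1: "(m - 1 - j + 1) mod m = (m - j) mod m" if "j < m" for j
  proof -
    have "m - 1 - j + 1 = m - j" using that by simp
    then show ?thesis by simp
  qed
  have key2: "m - 1 - j = (m - (j+1) mod m) mod m" if "j < m" for j
    using that by (cases "j + 1 = m") auto
  have "{(g j, g ((j+1) mod m)) | j. j < m} = Bw m i"
  proof
    show "{(g j, g ((j+1) mod m)) | j. j < m} \<subseteq> Bw m i"
    proof
      fix p assume "p \<in> {(g j, g ((j+1) mod m)) | j. j < m}"
      then obtain j where j: "j < m" "p = (g j, g ((j+1) mod m))" by blast
      define a where "a = m - 1 - j"
      have "a < m" using j assms by (simp add: a_def)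
      moreover have "p = (((a+1) mod m, \<not> ff i ((a+1) mod m)), (a, \<not> ff i a))"
        using j key1[OF j(1)] key2[OF j(1)] by (simp add: g_def a_def)
      ultimately show "p \<in> Bw m i" unfolding Bw_def by blast
    qed
    show "Bw m i \<subseteq> {(g j, g ((j+1) mod m)) | j. j < m}"
    proof
      fix p assume "p \<in> Bw m i"
      then obtain a where a: "a < m" "p = (((a+1) mod m, \<not> ff i ((a+1) mod m)), (a, \<not> ff i a))"
        unfolding Bw_def by blast
      define j where "j = m - 1 - a"
      have j: "j < m" using a assms by (simp add: j_def)
      have aj: "a = m - 1 - j" using a by (simp add: j_def)
      have "p = (g j, g ((j+1) mod m))"
        using a key1[OF j] key2[OF j] aj by (simp add: g_def)
      then show "p \<in> {(g j, g ((j+1) mod m)) | j. j < m}" using j by blast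
    qed
  qed
  then show ?thesis using dicycle_gen[OF inj] by simp
qed

lemma Fw_img: "Fw m i = (\<lambda>a. ((a, ff i a), ((a+1) mod m, ff i ((a+1) mod m)))) ` {..<m}"
  unfolding Fw_def by auto

lemma Bw_img: "Bw m i = (\<lambda>a. (((a+1) mod m, \<not> ff i ((a+1) mod m)), (a, \<not> ff i a))) ` {..<m}"
  unfolding Bw_def by auto

lemma Fw_verts:
  assumes "m > 0" shows "arc_verts (Fw m i) = (\<lambda>a. (a, ff i a)) ` {..<m}"
proof -
  have 1: "fst ` Fw m i = (\<lambda>a. (a, ff i a)) ` {..<m}"
    unfolding Fw_img image_image by simp
  have "snd ` Fw m i = (\<lambda>a. ((a+1) mod m, ff i ((a+1) mod m))) ` {..<m}"
    unfolding Fw_img image_image by simp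
  also have "\<dots> \<subseteq> (\<lambda>a. (a, ff i a)) ` {..<m}"
  proof
    fix x assume "x \<in> (\<lambda>a. ((a+1) mod m, ff i ((a+1) mod m))) ` {..<m}"
    then obtain a where "x = ((a+1) mod m, ff i ((a+1) mod m))" by blast
    moreover have "(a+1) mod m \<in> {..<m}" using assms by simp
    ultimately show "x \<in> (\<lambda>a. (a, ff i a)) ` {..<m}" by blast
  qed
  finally show ?thesis using 1 unfolding arc_verts_def by blast
qed

lemma Bw_verts:
  assumes "m > 0" shows "arc_verts (Bw m i) = (\<lambda>a. (a, \<not> ff i a)) ` {..<m}"
proof -
  have 1: "snd ` Bw m i = (\<lambda>a. (a, \<not> ff i a)) ` {..<m}"
    unfolding Bw_img image_image by simp
  have "fst ` Bw m i = (\<lambda>a. ((a+1) mod m, \<not> ff i ((a+1) mod m))) ` {..<m}"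
    unfolding Bw_img image_image by simp
  also have "\<dots> \<subseteq> (\<lambda>a. (a, \<not> ff i a)) ` {..<m}"
  proof
    fix x assume "x \<in> (\<lambda>a. ((a+1) mod m, \<not> ff i ((a+1) mod m))) ` {..<m}"
    then obtain a where "x = ((a+1) mod m, \<not> ff i ((a+1) mod m))" by blast
    moreover have "(a+1) mod m \<in> {..<m}" using assms by simp
    ultimately show "x \<in> (\<lambda>a. (a, \<not> ff i a)) ` {..<m}" by blast
  qed
  finally show ?thesis using 1 unfolding arc_verts_def by blast
qed

lemma col_cases:
  assumes "odd m" "m \<ge> 5" "a < m"
  shows "(a = 0 \<and> (\<forall>i. ff i a = (i = 0 \<or> i = 3)) \<and> (\<forall>i. ff i ((a+1) mod m) = (i < 2)))
    \<or> ((\<forall>i. ff i a = (i < 2)) \<and> (\<forall>i. ff i ((a+1) mod m) = even i))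
    \<or> ((\<forall>i. ff i a = even i) \<and> (\<forall>i. ff i ((a+1) mod m) = (i < 2)))
    \<or> ((\<forall>i. ff i a = even i) \<and> (\<forall>i. ff i ((a+1) mod m) = (i = 0 \<or> i = 3)))"
proof (cases "a = 0")
  case True
  then have "(a+1) mod m = 1" using assms by simp
  then show ?thesis using True by (simp add: ff_def)
next
  case False
  show ?thesis
  proof (cases "a + 1 = m")
    case True
    then have "even a" using assms by presburger
    moreover have "(a+1) mod m = 0" using True by simp
    ultimately show ?thesis using False by (simp add: ff_def)
  next
    case False2: False
    then have "(a+1) mod m = a + 1" using assms by simp
    then show ?thesis using False by (cases "odd a") (simp_all add: ff_def)
  qed
qed

lemma four: "(i::nat) < 4 \<longleftrightarrow> i \<in> {0,1,2,3}" by auto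

lemma ortho_inj:
  assumes "odd m" "m \<ge> 5" "a < m" "i < 4" "j < 4"
    "ff i a = ff j a" "ff i ((a+1) mod m) = ff j ((a+1) mod m)"
  shows "i = j"
proof -
  have i: "i = 0 \<or> i = 1 \<or> i = 2 \<or> i = 3" and j: "j = 0 \<or> j = 1 \<or> j = 2 \<or> j = 3"
    using assms(4,5) by auto
  from col_cases[OF assms(1-3)] show ?thesis
  proof (elim disjE conjE)
    assume "\<forall>i. ff i a = (i = 0 \<or> i = 3)" "\<forall>i. ff i ((a+1) mod m) = (i < 2)"
    then have "(i = 0 \<or> i = 3) = (j = 0 \<or> j = 3)" "(i < 2) = (j < 2)" using assms(6,7) by simp_all
    then show ?thesis using i j by (elim disjE) simp_all
  next
    assume "\<forall>i. ff i a = (i < 2)" "\<forall>i. ff i ((a+1) mod m) = even i"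
    then have "(i < 2) = (j < 2)" "even i = even j" using assms(6,7) by simp_all
    then show ?thesis using i j by (elim disjE) simp_all
  next
    assume "\<forall>i. ff i a = even i" "\<forall>i. ff i ((a+1) mod m) = (i < 2)"
    then have "(i < 2) = (j < 2)" "even i = even j" using assms(6,7) by simp_all
    then show ?thesis using i j by (elim disjE) simp_all
  next
    assume "\<forall>i. ff i a = even i" "\<forall>i. ff i ((a+1) mod m) = (i = 0 \<or> i = 3)"
    then have "(i = 0 \<or> i = 3) = (j = 0 \<or> j = 3)" "even i = even j" using assms(6,7) by simp_all
    then show ?thesis using i j by (elim disjE) simp_all
  qed
qed

lemma ortho_surj:
  assumes "odd m" "m \<ge> 5" "a < m"
  shows "\<exists>i<4. ff i a = u \<and> ff i ((a+1) mod m) = v"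
proof -
  have w: "\<exists>i<4. P i = u \<and> Q i = v"
    if "P 0 = u \<and> Q 0 = v \<or> P 1 = u \<and> Q 1 = v \<or> P 2 = u \<and> Q 2 = v \<or> P 3 = u \<and> Q 3 = v"
    for P Q :: "nat \<Rightarrow> bool"
    using that by (metis (full_types) less_numeral_extra(1) one_less_numeral_iff semiring_norm(76)
        numeral_less_iff num.simps zero_less_numeral numeral_Bit0 semiring_norm(68) four insertI1 insertCI)
  from col_cases[OF assms] show ?thesis
  proof (elim disjE conjE)
    assume A: "\<forall>i. ff i a = (i = 0 \<or> i = 3)" "\<forall>i. ff i ((a+1) mod m) = (i < 2)"
    show ?thesis by (rule w) (use A in \<open>cases u; cases v; simp\<close>)
  next
    assume A: "\<forall>i. ff i a = (i < 2)" "\<forall>i. ff i ((a+1) mod m) = even i"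
    show ?thesis by (rule w) (use A in \<open>cases u; cases v; simp\<close>)
  next
    assume A: "\<forall>i. ff i a = even i" "\<forall>i. ff i ((a+1) mod m) = (i < 2)"
    show ?thesis by (rule w) (use A in \<open>cases u; cases v; simp\<close>)
  next
    assume A: "\<forall>i. ff i a = even i" "\<forall>i. ff i ((a+1) mod m) = (i = 0 \<or> i = 3)"
    show ?thesis by (rule w) (use A in \<open>cases u; cases v; simp\<close>)
  qed
qed

lemma mod_twice_ne:
  fixes a m :: nat
  assumes "a < m" "m \<ge> 5"
  shows "((a+1) mod m + 1) mod m \<noteq> a"
proof (cases "a + 1 = m")
  case True
  then have "(a+1) mod m = 0" by simp
  then show ?thesis using True assms by simp
next
  case False
  then have 1: "(a+1) mod m = a + 1" using assms by simp
  show ?thesis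
  proof (cases "a + 2 = m")
    case True then show ?thesis using 1 assms by simp
  next
    case False
    then have "a + 2 < m" using \<open>a + 1 \<noteq> m\<close> assms by simp
    then have "(a + 1 + 1) mod m = a + 2" by simp
    then show ?thesis using 1 by simp
  qed
qed

lemma Fac_nonempty: "m > 0 \<Longrightarrow> Fac m i \<noteq> {}"
  unfolding Fac_def Fw_img by auto

lemma Fac_disj:
  assumes "odd m" "m \<ge> 5" "i < 4" "j < 4" "i \<noteq> j"
  shows "Fac m i \<inter> Fac m j = {}"
proof -
  have FF: "Fw m i \<inter> Fw m j = {}"
  proof (rule ccontr)
    assume "Fw m i \<inter> Fw m j \<noteq> {}"
    then obtain a b where a: "a < m" and b: "b < m" and
      e: "((a, ff i a), ((a+1) mod m, ff i ((a+1) mod m))) = ((b, ff j b), ((b+1) mod m, ff j ((b+1) mod m)))"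
      unfolding Fw_img by blast
    then have "a = b" by simp
    with e have "ff i a = ff j a" "ff i ((a+1) mod m) = ff j ((a+1) mod m)" by simp_all
    then show False using ortho_inj[OF assms(1,2) a assms(3,4)] assms(5) by blast
  qed
  have BB: "Bw m i \<inter> Bw m j = {}"
  proof (rule ccontr)
    assume "Bw m i \<inter> Bw m j \<noteq> {}"
    then obtain a b where a: "a < m" and b: "b < m" and
      e: "(((a+1) mod m, \<not> ff i ((a+1) mod m)), (a, \<not> ff i a)) = (((b+1) mod m, \<not> ff j ((b+1) mod m)), (b, \<not> ff j b))"
      unfolding Bw_img by blast
    then have "a = b" by simp
    with e have "ff i a = ff j a" "ff i ((a+1) mod m) = ff j ((a+1) mod m)" by simp_all
    then show False using ortho_inj[OF assms(1,2) a assms(3,4)] assms(5) by blast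
  qed
  have FB: "Fw m k \<inter> Bw m l = {}" for k l
  proof (rule ccontr)
    assume "Fw m k \<inter> Bw m l \<noteq> {}"
    then obtain a b where a: "a < m" and b: "b < m" and
      e: "((a, ff k a), ((a+1) mod m, ff k ((a+1) mod m))) = (((b+1) mod m, \<not> ff l ((b+1) mod m)), (b, \<not> ff l b))"
      unfolding Fw_img Bw_img by blast
    then have h1: "a = (b+1) mod m" and h2: "(a+1) mod m = b" unfolding prod.inject by blast+
    have "((b+1) mod m + 1) mod m = b" using h2 unfolding h1 .
    then show False using mod_twice_ne[OF b assms(2)] by blast
  qed
  show ?thesis unfolding Fac_def using FF BB FB[of i j] FB[of j i] by blast
qed

lemma Fac_factor:
  assumes "m \<ge> 5"
  shows "is_Cm_factor m (H_verts m) (H_arcs m) (Fac m i)"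
  unfolding is_Cm_factor_def
proof (intro conjI exI[of _ "{Fw m i, Bw m i}"])
  have m0: "m > 0" using assms by simp
  show "Fac m i \<subseteq> H_arcs m"
  proof
    fix p assume "p \<in> Fac m i"
    then show "p \<in> H_arcs m" unfolding Fac_def Fw_img Bw_img H_arcs_def using m0 by auto
  qed
  show "\<forall>C\<in>{Fw m i, Bw m i}. is_dicycle m C" using Fw_cycle Bw_cycle[OF m0] by blast
  have d: "arc_verts (Fw m i) \<inter> arc_verts (Bw m i) = {}"
    unfolding Fw_verts[OF m0] Bw_verts[OF m0] by auto
  then show "\<forall>C\<in>{Fw m i, Bw m i}. \<forall>D\<in>{Fw m i, Bw m i}. C \<noteq> D \<longrightarrow> arc_verts C \<inter> arc_verts D = {}"
    by blast
  show "\<Union> (arc_verts ` {Fw m i, Bw m i}) = H_verts m"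
  proof -
    have "\<Union> (arc_verts ` {Fw m i, Bw m i}) = (\<lambda>a. (a, ff i a)) ` {..<m} \<union> (\<lambda>a. (a, \<not> ff i a)) ` {..<m}"
      using Fw_verts[OF m0] Bw_verts[OF m0] by simp
    also have "\<dots> = H_verts m"
    proof
      show "(\<lambda>a. (a, ff i a)) ` {..<m} \<union> (\<lambda>a. (a, \<not> ff i a)) ` {..<m} \<subseteq> H_verts m"
        unfolding H_verts_def by auto
      show "H_verts m \<subseteq> (\<lambda>a. (a, ff i a)) ` {..<m} \<union> (\<lambda>a. (a, \<not> ff i a)) ` {..<m}"
      proof
        fix x assume "x \<in> H_verts m"
        then obtain a u where x: "x = (a, u)" "a < m" unfolding H_verts_def by auto
        show "x \<in> (\<lambda>a. (a, ff i a)) ` {..<m} \<union> (\<lambda>a. (a, \<not> ff i a)) ` {..<m}"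
          using x by (cases "u = ff i a") auto
      qed
    qed
    finally show ?thesis .
  qed
  show "\<Union> {Fw m i, Bw m i} = Fac m i" unfolding Fac_def by simp
qed

theorem mainTheorem3:
  fixes m :: nat
  assumes "odd m" and "m \<ge> 5"
  shows "\<exists>Fs. is_Cm_factorization m (H_verts m) (H_arcs m) Fs \<and> card Fs = 4"
proof (intro exI[of _ "Fac m ` {0,1,2,3}"] conjI)
  have m0: "m > 0" using assms by simp
  have disj: "i \<in> {0,1,2,3} \<Longrightarrow> j \<in> {0,1,2,3} \<Longrightarrow> i \<noteq> j \<Longrightarrow> Fac m i \<inter> Fac m j = {}" for i j
    using Fac_disj[OF assms, of i j] four by blast
  have inj: "inj_on (Fac m) {0,1,2,3}"
  proof (rule inj_onI)
    fix i j assume "i \<in> {0,1,2,3::nat}" "j \<in> {0,1,2,3::nat}" "Fac m i = Fac m j"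
    then show "i = j" using disj[of i j] Fac_nonempty[OF m0, of i] by auto
  qed
  show "card (Fac m ` {0,1,2,3}) = 4" using card_image[OF inj] by simp
  show "is_Cm_factorization m (H_verts m) (H_arcs m) (Fac m ` {0,1,2,3})"
    unfolding is_Cm_factorization_def
  proof (intro conjI)
    show "\<forall>F\<in>Fac m ` {0,1,2,3}. is_Cm_factor m (H_verts m) (H_arcs m) F"
    proof
      fix F assume "F \<in> Fac m ` {0,1,2,3}"
      then obtain i where "F = Fac m i" by blast
      then show "is_Cm_factor m (H_verts m) (H_arcs m) F" using Fac_factor[OF assms(2)] by simp
    qed
    show "\<forall>F\<in>Fac m ` {0,1,2,3}. \<forall>G\<in>Fac m ` {0,1,2,3}. F \<noteq> G \<longrightarrow> F \<inter> G = {}"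
    proof (intro ballI impI)
      fix F G assume "F \<in> Fac m ` {0,1,2,3}" "G \<in> Fac m ` {0,1,2,3}" "F \<noteq> G"
      then obtain i j where "i \<in> {0,1,2,3}" "j \<in> {0,1,2,3}" "F = Fac m i" "G = Fac m j"
        by (meson imageE)
      then show "F \<inter> G = {}" using disj[of i j] \<open>F \<noteq> G\<close> by metis
    qed
    show "\<Union> (Fac m ` {0,1,2,3}) = H_arcs m"
    proof
      show "\<Union> (Fac m ` {0,1,2,3}) \<subseteq> H_arcs m"
      proof
        fix p assume "p \<in> \<Union> (Fac m ` {0,1,2,3})"
        then obtain i where "p \<in> Fac m i" by blast
        moreover have "Fac m i \<subseteq> H_arcs m"
          using Fac_factor[OF assms(2), of i] unfolding is_Cm_factor_def by (elim conjE)
        ultimately show "p \<in> H_arcs m" by blast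
      qed
      show "H_arcs m \<subseteq> \<Union> (Fac m ` {0,1,2,3})"
      proof
        fix p assume "p \<in> H_arcs m"
        then obtain a u b v where p: "p = ((a, u), (b, v))" "a < m" "b < m"
          and ab: "b = (a + 1) mod m \<or> a = (b + 1) mod m"
          unfolding H_arcs_def by auto
        from ab show "p \<in> \<Union> (Fac m ` {0,1,2,3})"
        proof
          assume b: "b = (a + 1) mod m"
          obtain i where i: "i < 4" "ff i a = u" "ff i ((a+1) mod m) = v"
            using ortho_surj[OF assms p(2)] by blast
          have "p \<in> Fw m i" unfolding Fw_def using i p b by blast
          moreover have "i \<in> {0,1,2,3}" using i four by blast
          ultimately show ?thesis unfolding Fac_def by blast
        next
          assume a: "a = (b + 1) mod m"
          obtain i where i: "i < 4" "ff i b = (\<not> v)" "ff i ((b+1) mod m) = (\<not> u)"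
            using ortho_surj[OF assms p(3)] by blast
          have "p = (((b+1) mod m, \<not> ff i ((b+1) mod m)), (b, \<not> ff i b))"
            using i p a by simp
          then have "p \<in> Bw m i" unfolding Bw_def using p(3) by blast
          moreover have "i \<in> {0,1,2,3}" using i four by blast
          ultimately show ?thesis unfolding Fac_def by blast
        qed
      qed
    qed
  qed
qed

end
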